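(* Let $p$ be a prime, $\Gamma\subset\mathbb{F}_p^*$ a multiplicative subgroup, and $A,B\subseteq\mathbb{F}_p$ two sets. Let $g:\mathbb{F}_p\to\mathbb{R}_{\ge0}$ be an even $\Gamma$-invariant function supported on $S_\Gamma(A-A)$. Suppose that $A-B\subseteq\Gamma\sqcup\{0\}$ and $$|B|\sum_x g(x)(A\circ A)(x)\ge3\sum_x g(x)(A\circ B)(x).$$ Then $$\left(\sum_x g(x)(A\circ A)(x)\right)^2\ll\frac{\mathsf{T}(A,B)}{|B|^2|\Gamma|}\cdot\sum_x g^2(x)(\Gamma\circ\Gamma)(x).$$
   Context: For $Q\subseteq\mathbb{F}_p$, $S_\Gamma(Q)$ is the minimal $\Gamma$-invariant set containing $Q$ (i.e. $\Gamma Q=\{\gamma x:\gamma\in\Gamma,x\in Q\}$). Sets are identified with indicator functions; $(X\circ Y)(x)=\sum_yX(y)Y(y+x)$. $g$ even means $g(-x)=g(x)$; $\Gamma$-invariant means $g(\gamma x)=g(x)$ for $\gamma\in\Gamma$. $\mathsf{E}^\times(X,Y)=|\{x_1y_1=x_2y_2: x_i\in X,y_i\in Y\}|$ and $\mathsf{T}(A,B)=\sum_{b,b'\in B}\mathsf{E}^\times(A-b,A-b')$. $X\ll Y$ means $X\le cY$ with an absolute constant $c$. *)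

theory Defs
  imports Complex_Main "HOL-Computational_Algebra.Primes"
begin

text \<open>F_p is represented by the residues {..<p} (naturals) with arithmetic mod p.\<close>

definition fp_sub :: "nat \<Rightarrow> nat \<Rightarrow> nat \<Rightarrow> nat" where
  "fp_sub p x y = (x + p - y) mod p"

definition fp_neg :: "nat \<Rightarrow> nat \<Rightarrow> nat" where
  "fp_neg p x = (p - x) mod p"

definition fp_mul :: "nat \<Rightarrow> nat \<Rightarrow> nat \<Rightarrow> nat" where
  "fp_mul p x y = (x * y) mod p"

definition fp_add :: "nat \<Rightarrow> nat \<Rightarrow> nat \<Rightarrow> nat" where
  "fp_add p x y = (x + y) mod p"

definition mult_subgroup :: "nat \<Rightarrow> nat set \<Rightarrow> bool" where
  "mult_subgroup p G \<longleftrightarrow> G \<subseteq> {1..<p} \<and> 1 \<in> G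
     \<and> (\<forall>x\<in>G. \<forall>y\<in>G. fp_mul p x y \<in> G)
     \<and> (\<forall>x\<in>G. \<exists>y\<in>G. fp_mul p x y = 1)"

definition diffset :: "nat \<Rightarrow> nat set \<Rightarrow> nat set \<Rightarrow> nat set" where
  "diffset p X Y = {fp_sub p x y | x y. x \<in> X \<and> y \<in> Y}"

definition shift :: "nat \<Rightarrow> nat set \<Rightarrow> nat \<Rightarrow> nat set" where
  "shift p X b = {fp_sub p x b | x. x \<in> X}"

definition S_Gamma :: "nat \<Rightarrow> nat set \<Rightarrow> nat set \<Rightarrow> nat set" where
  "S_Gamma p G Q = {fp_mul p g x | g x. g \<in> G \<and> x \<in> Q}"

definition circ :: "nat \<Rightarrow> nat set \<Rightarrow> nat set \<Rightarrow> nat \<Rightarrow> real" where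
  "circ p X Y x = real (card {y \<in> {..<p}. y \<in> X \<and> fp_add p y x \<in> Y})"

definition Emult :: "nat \<Rightarrow> nat set \<Rightarrow> nat set \<Rightarrow> nat" where
  "Emult p X Y = card {(x1, y1, x2, y2). x1 \<in> X \<and> y1 \<in> Y \<and> x2 \<in> X \<and> y2 \<in> Y
                        \<and> fp_mul p x1 y1 = fp_mul p x2 y2}"

definition T_AB :: "nat \<Rightarrow> nat set \<Rightarrow> nat set \<Rightarrow> nat" where
  "T_AB p A B = (\<Sum>b\<in>B. \<Sum>b'\<in>B. Emult p (shift p A b) (shift p A b'))"

end

theory Submission imports Defs "HOL-Analysis.Convex" begin

lemma sub_int: "y \<le> p \<Longrightarrow> int (fp_sub p x y) = (int x - int y) mod int p"
proof -
  assume y: "y \<le> p"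
  have "int (x + p - y) = (int x - int y) + int p" using y by simp
  hence "int (fp_sub p x y) = ((int x - int y) + int p) mod int p"
    unfolding fp_sub_def by (metis of_nat_mod)
  thus ?thesis by simp
qed
lemma mul_int: "int (fp_mul p x y) = (int x * int y) mod int p"
  unfolding fp_mul_def by (simp add: of_nat_mod)
lemma add_int: "int (fp_add p x y) = (int x + int y) mod int p"
  unfolding fp_add_def by (simp add: of_nat_mod)
lemma neg_int: "x \<le> p \<Longrightarrow> int (fp_neg p x) = (- int x) mod int p"
proof -
  assume y: "x \<le> p"
  have "int (p - x) = (- int x) + int p" using y by simp
  hence "int (fp_neg p x) = ((- int x) + int p) mod int p"
    unfolding fp_neg_def by (metis of_nat_mod)
  thus ?thesis by simp
qed
lemma eq_via: "x < p \<Longrightarrow> y < p \<Longrightarrow> x = y \<longleftrightarrow> int x = int y" by simp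
lemma small: "x < p \<Longrightarrow> int x mod int p = int x" by simp

lemma sub_lt: "0 < p \<Longrightarrow> fp_sub p x y < p" unfolding fp_sub_def by simp
lemma mul_lt: "0 < p \<Longrightarrow> fp_mul p x y < p" unfolding fp_mul_def by simp
lemma add_lt: "0 < p \<Longrightarrow> fp_add p x y < p" unfolding fp_add_def by simp

lemma neg_sub: "a < p \<Longrightarrow> b < p \<Longrightarrow> fp_neg p (fp_sub p b a) = fp_sub p a b"
proof -
  assume h: "a < p" "b < p"
  have p0: "0 < p" using h by simp
  have "int (fp_neg p (fp_sub p b a)) = (- int (fp_sub p b a)) mod int p"
    by (rule neg_int) (use sub_lt[OF p0, of b a] in simp)
  also have "\<dots> = (- ((int b - int a) mod int p)) mod int p" using h by (simp add: sub_int)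
  also have "\<dots> = (- (int b - int a)) mod int p" by (rule mod_minus_eq)
  also have "\<dots> = (int a - int b) mod int p" by simp
  also have "\<dots> = int (fp_sub p a b)" using h by (simp add: sub_int)
  finally show ?thesis by simp
qed

lemma sub_add: "x < p \<Longrightarrow> y < p \<Longrightarrow> fp_sub p (fp_add p y x) y = x"
proof -
  assume h: "x < p" "y < p"
  have "int (fp_sub p (fp_add p y x) y) = (int (fp_add p y x) - int y) mod int p"
    using h by (simp add: sub_int)
  also have "\<dots> = ((int y + int x) mod int p - int y) mod int p" by (simp add: add_int)
  also have "\<dots> = ((int y + int x) - int y) mod int p" by (rule mod_diff_left_eq)
  also have "\<dots> = int x" using h by simp
  finally show ?thesis by simp
qed

lemma add_sub: "z < p \<Longrightarrow> y < p \<Longrightarrow> fp_add p y (fp_sub p z y) = z"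
proof -
  assume h: "z < p" "y < p"
  have "int (fp_add p y (fp_sub p z y)) = (int y + int (fp_sub p z y)) mod int p"
    by (simp add: add_int)
  also have "\<dots> = (int y + (int z - int y) mod int p) mod int p" using h by (simp add: sub_int)
  also have "\<dots> = (int y + (int z - int y)) mod int p" by (rule mod_add_right_eq)
  also have "\<dots> = int z" using h by simp
  finally show ?thesis by simp
qed

lemma sub_sub: "a < p \<Longrightarrow> a' < p \<Longrightarrow> b < p \<Longrightarrow>
   fp_sub p (fp_sub p a' b) (fp_sub p a b) = fp_sub p a' a"
proof -
  assume h: "a < p" "a' < p" "b < p"
  have p0: "0 < p" using h by simp
  have "int (fp_sub p (fp_sub p a' b) (fp_sub p a b)) = (int (fp_sub p a' b) - int (fp_sub p a b)) mod int p"
    by (rule sub_int) (use sub_lt[OF p0, of a b] in simp)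
  also have "\<dots> = ((int a' - int b) mod int p - (int a - int b) mod int p) mod int p"
    using h by (simp add: sub_int)
  also have "\<dots> = ((int a' - int b) - (int a - int b)) mod int p" by (rule mod_diff_eq)
  also have "\<dots> = (int a' - int a) mod int p" by simp
  also have "\<dots> = int (fp_sub p a' a)" using h by (simp add: sub_int)
  finally show ?thesis by simp
qed

lemma sub_mul: "0 < p \<Longrightarrow> u < p \<Longrightarrow> fp_sub p (fp_mul p l u) u = fp_mul p u (fp_sub p l 1)"
proof -
  assume p0: "0 < p" and u: "u < p"
  have "int (fp_sub p (fp_mul p l u) u) = (int (fp_mul p l u) - int u) mod int p"
    using u by (simp add: sub_int)
  also have "\<dots> = ((int l * int u) mod int p - int u) mod int p" by (simp add: mul_int)
  also have "\<dots> = (int l * int u - int u) mod int p" by (rule mod_diff_left_eq)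
  also have "\<dots> = (int u * (int l - 1)) mod int p" by (simp add: algebra_simps)
  also have "\<dots> = (int u * ((int l - 1) mod int p)) mod int p" by (rule mod_mult_right_eq[symmetric])
  also have "\<dots> = int (fp_mul p u (fp_sub p l 1))" using p0 by (simp add: sub_int mul_int)
  finally show ?thesis by simp
qed
lemma mul_comm: "fp_mul p x y = fp_mul p y x" unfolding fp_mul_def by (simp add: mult.commute)

lemma mul_cancel:
  assumes p: "prime p" and u: "u < p" "u \<noteq> 0" and l: "l < p" "l' < p"
    and e: "fp_mul p l u = fp_mul p l' u"
  shows "l = l'"
proof -
  have pi: "prime (int p)" using p by simp
  from e have "int (fp_mul p l u) = int (fp_mul p l' u)" by simp
  hence "(int l * int u) mod int p = (int l' * int u) mod int p" by (simp add: mul_int)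
  hence "int p dvd (int l * int u - int l' * int u)" by (simp add: mod_eq_dvd_iff)
  hence "int p dvd (int l - int l') * int u" by (simp add: left_diff_distrib)
  moreover have "\<not> int p dvd int u"
  proof
    assume "int p dvd int u"
    hence "p dvd u" by simp
    thus False using u by (simp add: nat_dvd_not_less)
  qed
  ultimately have "int p dvd int l - int l'" using pi prime_dvd_mult_iff by blast
  hence "int l mod int p = int l' mod int p" by (simp add: mod_eq_dvd_iff)
  thus ?thesis using l by simp
qed

lemma sub_inj: "x < p \<Longrightarrow> y < p \<Longrightarrow> b < p \<Longrightarrow> fp_sub p x b = fp_sub p y b \<Longrightarrow> x = y"
proof -
  assume h: "x < p" "y < p" "b < p" "fp_sub p x b = fp_sub p y b"
  have "x = fp_add p b (fp_sub p x b)" using add_sub h by metis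
  also have "\<dots> = fp_add p b (fp_sub p y b)" using h by simp
  also have "\<dots> = y" using add_sub h by metis
  finally show ?thesis .
qed

lemma sub_zero: "a < p \<Longrightarrow> b < p \<Longrightarrow> fp_sub p a b = 0 \<longleftrightarrow> a = b"
proof -
  assume h: "a < p" "b < p"
  have "fp_sub p a b = 0 \<longleftrightarrow> int (fp_sub p a b) = 0" by simp
  also have "\<dots> \<longleftrightarrow> (int a - int b) mod int p = 0" using h by (simp add: sub_int)
  also have "\<dots> \<longleftrightarrow> int a mod int p = int b mod int p" by (simp add: mod_eq_dvd_iff dvd_eq_mod_eq_0[symmetric])
  also have "\<dots> \<longleftrightarrow> a = b" using h by simp
  finally show ?thesis .
qed

lemma circ_sum:
  assumes p: "0 < p" and X: "X \<subseteq> {..<p}" and Y: "Y \<subseteq> {..<p}"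
  shows "(\<Sum>x<p. f x * circ p X Y x) = (\<Sum>y\<in>X. \<Sum>z\<in>Y. f (fp_sub p z y))"
proof -
  have fX: "finite X" using X finite_subset by blast
  have c: "circ p X Y x = (\<Sum>y\<in>X. if fp_add p y x \<in> Y then 1 else 0)" for x
  proof -
    have "{y \<in> {..<p}. y \<in> X \<and> fp_add p y x \<in> Y} = {y\<in>X. fp_add p y x \<in> Y}" using X by auto
    thus ?thesis unfolding circ_def using sum.inter_filter[OF fX, of "\<lambda>_. 1::real" "\<lambda>y. fp_add p y x \<in> Y"] by simp
  qed
  have "(\<Sum>x<p. f x * circ p X Y x) = (\<Sum>x<p. \<Sum>y\<in>X. if fp_add p y x \<in> Y then f x else 0)"
    unfolding c by (simp add: sum_distrib_left if_distrib cong: if_cong)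
  also have "\<dots> = (\<Sum>y\<in>X. \<Sum>x<p. if fp_add p y x \<in> Y then f x else 0)" by (rule sum.swap)
  also have "\<dots> = (\<Sum>y\<in>X. \<Sum>z\<in>Y. f (fp_sub p z y))"
  proof (rule sum.cong[OF refl])
    fix y assume y: "y \<in> X"
    hence yp: "y < p" using X by auto
    have "(\<Sum>x<p. if fp_add p y x \<in> Y then f x else 0) = (\<Sum>x\<in>{x\<in>{..<p}. fp_add p y x \<in> Y}. f x)"
      using sum.inter_filter[of "{..<p}" f "\<lambda>x. fp_add p y x \<in> Y"] by simp
    also have "\<dots> = (\<Sum>z\<in>Y. f (fp_sub p z y))"
      apply (rule sum.reindex_bij_witness[where j="\<lambda>x. fp_add p y x" and i="\<lambda>z. fp_sub p z y"])
      using yp Y p by (auto simp: sub_add add_sub sub_lt)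
    finally show "(\<Sum>x<p. if fp_add p y x \<in> Y then f x else 0) = (\<Sum>z\<in>Y. f (fp_sub p z y))" .
  qed
  finally show ?thesis .
qed

lemma mul_inv_cancel: "0 < p \<Longrightarrow> fp_mul p u ui = 1 \<Longrightarrow> v < p \<Longrightarrow> fp_mul p (fp_mul p v ui) u = v"
proof -
  assume h: "0 < p" "fp_mul p u ui = 1" "v < p"
  have "int (fp_mul p (fp_mul p v ui) u) = (int v * ((int u * int ui) mod int p)) mod int p"
    by (simp add: mul_int mod_mult_left_eq mod_mult_right_eq ac_simps)
  also have "\<dots> = int v" using h(2,3) mul_int[of p u ui] by simp
  finally show ?thesis by simp
qed

lemma mul_swap: "fp_mul p (fp_mul p l u) u' = fp_mul p u (fp_mul p l u')"
proof -
  have "int (fp_mul p (fp_mul p l u) u') = int (fp_mul p u (fp_mul p l u'))"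
    by (simp add: mul_int mod_mult_left_eq mod_mult_right_eq ac_simps)
  thus ?thesis by simp
qed

lemma split_le:
  fixes F :: "nat \<Rightarrow> nat \<Rightarrow> real"
  assumes fA: "finite A" and nn: "\<And>x y. F x y \<ge> 0"
  shows "(\<Sum>a\<in>A. \<Sum>a'\<in>A. F a a') \<le> (\<Sum>a\<in>A-{b}. \<Sum>a'\<in>A-{b}. F a a') + (\<Sum>a'\<in>A. F b a') + (\<Sum>a\<in>A. F a b)"
proof (cases "b \<in> A")
  case False
  hence "A - {b} = A" by auto
  thus ?thesis using nn by (simp add: sum_nonneg add_nonneg_nonneg)
next
  case True
  have "(\<Sum>a\<in>A. \<Sum>a'\<in>A. F a a') = (\<Sum>a'\<in>A. F b a') + (\<Sum>a\<in>A-{b}. \<Sum>a'\<in>A. F a a')"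
    using sum.remove[OF fA True] by blast
  also have "(\<Sum>a\<in>A-{b}. \<Sum>a'\<in>A. F a a') = (\<Sum>a\<in>A-{b}. F a b + (\<Sum>a'\<in>A-{b}. F a a'))"
    using sum.remove[OF fA True] by (intro sum.cong) auto
  also have "\<dots> = (\<Sum>a\<in>A-{b}. F a b) + (\<Sum>a\<in>A-{b}. \<Sum>a'\<in>A-{b}. F a a')"
    by (rule sum.distrib)
  also have "(\<Sum>a\<in>A-{b}. F a b) \<le> (\<Sum>a\<in>A. F a b)"
    using fA nn by (intro sum_mono2) auto
  finally show ?thesis by linarith
qed

lemma core:
  fixes g :: "nat \<Rightarrow> real"
  assumes p: "prime p" and G: "mult_subgroup p G" and A: "A \<subseteq> {..<p}" and B: "B \<subseteq> {..<p}"
    and inv: "\<forall>x<p. \<forall>\<gamma>\<in>G. g (fp_mul p \<gamma> x) = g x"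
    and dif: "diffset p A B \<subseteq> G \<union> {0}"
  shows "(\<Sum>b\<in>B. \<Sum>a\<in>A-{b}. \<Sum>a'\<in>A-{b}. g (fp_sub p a' a))^2 * real (card G)
         \<le> real (T_AB p A B) * (\<Sum>w\<in>G. \<Sum>z\<in>G. (g (fp_sub p z w))^2)"
proof -
  have p0: "0 < p" using p prime_gt_0_nat by blast
  have Gall: "G \<subseteq> {1..<p} \<and> 1 \<in> G
     \<and> (\<forall>x\<in>G. \<forall>y\<in>G. fp_mul p x y \<in> G)
     \<and> (\<forall>x\<in>G. \<exists>y\<in>G. fp_mul p x y = 1)" using G unfolding mult_subgroup_def .
  have Gsub: "G \<subseteq> {1..<p}" using Gall by (rule conjunct1)
  have Gmul: "\<And>x y. x\<in>G \<Longrightarrow> y\<in>G \<Longrightarrow> fp_mul p x y \<in> G" using Gall by simp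
  have Ginv: "\<And>x. x\<in>G \<Longrightarrow> \<exists>y\<in>G. fp_mul p x y = 1" using Gall by simp
  have fG: "finite G" using Gsub finite_subset by blast
  have fA: "finite A" using A finite_subset by blast
  have fB: "finite B" using B finite_subset by blast
  have Glt: "x \<in> G \<Longrightarrow> x < p \<and> x \<noteq> 0" for x using Gsub by fastforce
  define D where "D = (SIGMA b:B. (A-{b}) \<times> (A-{b}))"
  have fD: "finite D" unfolding D_def using fA fB by auto
  have inG: "fp_sub p a b \<in> G" if "a \<in> A" "b \<in> B" "a \<noteq> b" for a b
  proof -
    have "fp_sub p a b \<in> diffset p A B" unfolding diffset_def using that by blast
    moreover have "fp_sub p a b \<noteq> 0" using sub_zero[of a p b] that A B by auto
    ultimately show ?thesis using dif by (meson Un_iff in_mono singletonD)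
  qed
  define P where "P = (\<lambda>b a a' l. l \<in> G \<and> fp_sub p a' b = fp_mul p l (fp_sub p a b))"
  have ex1: "\<exists>!l. P b a a' l" if "(b,a,a') \<in> D" for b a a'
  proof -
    have h: "b \<in> B" "a \<in> A" "a' \<in> A" "a \<noteq> b" "a' \<noteq> b" using that unfolding D_def by auto
    let ?u = "fp_sub p a b" and ?v = "fp_sub p a' b"
    have u: "?u \<in> G" and v: "?v \<in> G" using inG h by auto
    obtain ui where ui: "ui \<in> G" "fp_mul p ?u ui = 1" using Ginv[OF u] by blast
    have "P b a a' (fp_mul p ?v ui)" unfolding P_def
      using Gmul[OF v ui(1)] mul_inv_cancel[OF p0 ui(2) sub_lt[OF p0]] by simp
    moreover have "l = l'" if "P b a a' l" "P b a a' l'" for l l'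
    proof -
      have "l \<in> G" "l' \<in> G" "fp_mul p l ?u = fp_mul p l' ?u" using that unfolding P_def by auto
      thus ?thesis using mul_cancel[OF p, of ?u l l'] Glt[OF u] Glt by blast
    qed
    ultimately show ?thesis by blast
  qed
  define lam where "lam = (\<lambda>(b,a,a'). THE l. P b a a' l)"
  have lamP: "P b a a' (lam (b,a,a'))" if "(b,a,a') \<in> D" for b a a'
    unfolding lam_def prod.case by (rule theI'[OF ex1[OF that]])
  define h where "h = (\<lambda>l. g (fp_sub p l 1))"
  define R where "R = (\<lambda>l. {t\<in>D. lam t = l})"
  have lamG: "lam t \<in> G" if "t \<in> D" for t
  proof -
    obtain b a a' where te: "t = (b,a,a')" by (metis prod.exhaust)
    show ?thesis using lamP[of b a a'] that unfolding te P_def by blast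
  qed
  have gh: "g (fp_sub p a' a) = h (lam (b,a,a'))" if "(b,a,a') \<in> D" for b a a'
  proof -
    have h0: "b \<in> B" "a \<in> A" "a' \<in> A" "a \<noteq> b" using that unfolding D_def by auto
    hence lt: "a < p" "a' < p" "b < p" using A B by auto
    let ?l = "lam (b,a,a')" and ?u = "fp_sub p a b"
    have u: "?u \<in> G" by (rule inG[OF h0(2) h0(1) h0(4)])
    have e: "fp_sub p a' b = fp_mul p ?l ?u" using lamP[OF that] unfolding P_def by blast
    have "fp_sub p a' a = fp_sub p (fp_sub p a' b) ?u" using sub_sub[OF lt(1) lt(2) lt(3)] by simp
    also have "\<dots> = fp_mul p ?u (fp_sub p ?l 1)" unfolding e by (rule sub_mul[OF p0 sub_lt[OF p0]])
    finally have "g (fp_sub p a' a) = g (fp_mul p ?u (fp_sub p ?l 1))" by simp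
    also have "\<dots> = g (fp_sub p ?l 1)" using inv[rule_format, OF sub_lt[OF p0] u] .
    finally show ?thesis unfolding h_def .
  qed
  have M_eq: "(\<Sum>b\<in>B. \<Sum>a\<in>A-{b}. \<Sum>a'\<in>A-{b}. g (fp_sub p a' a)) = (\<Sum>(b,a,a')\<in>D. g (fp_sub p a' a))"
    unfolding D_def using fA fB
    by (simp add: sum.Sigma[symmetric] sum.cartesian_product[symmetric])
  also have "\<dots> = (\<Sum>t\<in>D. h (lam t))"
    by (intro sum.cong refl) (auto simp: gh)
  also have "\<dots> = (\<Sum>l\<in>G. \<Sum>t\<in>R l. h (lam t))"
  proof -
    have "lam ` D \<subseteq> G" using lamG by blast
    from sum.group[OF fD fG this, of "\<lambda>t. h (lam t)"] show ?thesis unfolding R_def by simp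
  qed
  also have "\<dots> = (\<Sum>l\<in>G. h l * real (card (R l)))"
    by (intro sum.cong refl) (simp add: R_def)
  finally have M_eq2: "(\<Sum>b\<in>B. \<Sum>a\<in>A-{b}. \<Sum>a'\<in>A-{b}. g (fp_sub p a' a)) = (\<Sum>l\<in>G. h l * real (card (R l)))" .
  have S_eq: "(\<Sum>w\<in>G. \<Sum>z\<in>G. (g (fp_sub p z w))^2) = real (card G) * (\<Sum>l\<in>G. (h l)^2)"
  proof -
    have "(\<Sum>z\<in>G. (g (fp_sub p z w))^2) = (\<Sum>l\<in>G. (h l)^2)" if w: "w \<in> G" for w
    proof -
      have wp: "w < p" using Glt[OF w] by simp
      have inj: "inj_on (fp_mul p w) G"
      proof (rule inj_onI)
        fix x y assume x: "x \<in> G" and y: "y \<in> G" and e: "fp_mul p w x = fp_mul p w y"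
        have "fp_mul p x w = fp_mul p y w" using e mul_comm by metis
        thus "x = y" using mul_cancel[OF p, of w x y] Glt[OF w] Glt[OF x] Glt[OF y] by blast
      qed
      have im: "fp_mul p w ` G \<subseteq> G" using Gmul w by auto
      have bij: "bij_betw (fp_mul p w) G G"
        unfolding bij_betw_def using endo_inj_surj[OF fG im inj] inj by auto
      have "(\<Sum>z\<in>G. (g (fp_sub p z w))^2) = (\<Sum>l\<in>G. (g (fp_sub p (fp_mul p w l) w))^2)"
        using sum.reindex_bij_betw[OF bij, of "\<lambda>z. (g (fp_sub p z w))^2"] by simp
      also have "\<dots> = (\<Sum>l\<in>G. (h l)^2)"
      proof (intro sum.cong refl)
        fix l assume "l \<in> G"
        have "fp_sub p (fp_mul p w l) w = fp_mul p w (fp_sub p l 1)"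
          using sub_mul[OF p0 wp, of l] mul_comm by metis
        hence "g (fp_sub p (fp_mul p w l) w) = g (fp_sub p l 1)"
          using inv[rule_format, OF sub_lt[OF p0] w] by simp
        thus "(g (fp_sub p (fp_mul p w l) w))^2 = (h l)^2" unfolding h_def by simp
      qed
      finally show ?thesis .
    qed
    hence "(\<Sum>w\<in>G. \<Sum>z\<in>G. (g (fp_sub p z w))^2) = (\<Sum>w\<in>G. \<Sum>l\<in>G. (h l)^2)" by simp
    thus ?thesis by simp
  qed
  define E where "E = (\<lambda>b b'. {(x1, y1, x2, y2). x1 \<in> shift p A b \<and> y1 \<in> shift p A b' \<and> x2 \<in> shift p A b \<and> y2 \<in> shift p A b'
                        \<and> fp_mul p x1 y1 = fp_mul p x2 y2})"
  have shsub: "shift p A b \<subseteq> {..<p}" for b unfolding shift_def using sub_lt[OF p0] by auto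
  have fE: "finite (E b b')" for b b'
  proof (rule finite_subset)
    show "E b b' \<subseteq> {..<p} \<times> {..<p} \<times> {..<p} \<times> {..<p}"
      unfolding E_def using shsub[of b] shsub[of b'] by auto
  qed simp
  have T_eq: "T_AB p A B = card (SIGMA b:B. SIGMA b':B. E b b')"
  proof -
    have "T_AB p A B = (\<Sum>b\<in>B. \<Sum>b'\<in>B. card (E b b'))"
      unfolding T_AB_def Emult_def E_def by simp
    also have "\<dots> = (\<Sum>b\<in>B. card (SIGMA b':B. E b b'))"
      using fB fE by simp
    also have "\<dots> = card (SIGMA b:B. SIGMA b':B. E b b')"
      using fB fE by simp
    finally show ?thesis .
  qed
  have fR: "finite (R l)" for l unfolding R_def using fD by auto
  have r_eq: "(\<Sum>l\<in>G. (real (card (R l)))^2) = real (card (SIGMA l:G. R l \<times> R l))"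
  proof -
    have "card (SIGMA l:G. R l \<times> R l) = (\<Sum>l\<in>G. card (R l \<times> R l))" using fG fR by simp
    also have "\<dots> = (\<Sum>l\<in>G. (card (R l))^2)" by (simp add: card_cartesian_product power2_eq_square)
    finally show ?thesis by simp
  qed
  define f where "f = (\<lambda>(l::nat, (b::nat,a1::nat,a1'::nat), (b'::nat,a2::nat,a2'::nat)).
      (b, b', (fp_sub p a1' b, fp_sub p a2 b', fp_sub p a1 b, fp_sub p a2' b')))"
  have finj: "inj_on f (SIGMA l:G. R l \<times> R l)"
  proof (rule inj_onI)
    fix x y assume x: "x \<in> (SIGMA l:G. R l \<times> R l)" and y: "y \<in> (SIGMA l:G. R l \<times> R l)" and e: "f x = f y"
    obtain l b a1 a1' b' a2 a2' where xe: "x = (l,(b,a1,a1'),(b',a2,a2'))" by (metis prod.exhaust)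
    obtain m c c1 c1' c' c2 c2' where ye: "y = (m,(c,c1,c1'),(c',c2,c2'))" by (metis prod.exhaust)
    have xin: "(b,a1,a1') \<in> D" "(b',a2,a2') \<in> D" "lam (b,a1,a1') = l"
      using x unfolding xe R_def by auto
    have yin: "(c,c1,c1') \<in> D" "(c',c2,c2') \<in> D" "lam (c,c1,c1') = m"
      using y unfolding ye R_def by auto
    have lts: "b < p" "a1 < p" "a1' < p" "b' < p" "a2 < p" "a2' < p"
              "c1 < p" "c1' < p" "c2 < p" "c2' < p"
      using xin yin A B unfolding D_def by auto
    from e have eq: "b = c" "b' = c'" "fp_sub p a1' b = fp_sub p c1' c" "fp_sub p a2 b' = fp_sub p c2 c'"
      "fp_sub p a1 b = fp_sub p c1 c" "fp_sub p a2' b' = fp_sub p c2' c'"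
      unfolding xe ye f_def by auto
    have "a1' = c1'" using sub_inj[OF lts(3) lts(8) lts(1)] eq(1,3) by simp
    moreover have "a2 = c2" using sub_inj[OF lts(5) lts(9) lts(4)] eq(2,4) by simp
    moreover have "a1 = c1" using sub_inj[OF lts(2) lts(7) lts(1)] eq(1,5) by simp
    moreover have "a2' = c2'" using sub_inj[OF lts(6) lts(10) lts(4)] eq(2,6) by simp
    ultimately show "x = y" using xin yin eq(1,2) unfolding xe ye by auto
  qed
  have fim: "f ` (SIGMA l:G. R l \<times> R l) \<subseteq> (SIGMA b:B. SIGMA b':B. E b b')"
  proof
    fix z assume "z \<in> f ` (SIGMA l:G. R l \<times> R l)"
    then obtain x where x: "x \<in> (SIGMA l:G. R l \<times> R l)" and ze: "z = f x" by blast
    obtain l b a1 a1' b' a2 a2' where xe: "x = (l,(b,a1,a1'),(b',a2,a2'))" by (metis prod.exhaust)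
    have xin: "(b,a1,a1') \<in> R l" "(b',a2,a2') \<in> R l" using x unfolding xe by auto
    have D1: "(b,a1,a1') \<in> D" "lam (b,a1,a1') = l" and D2: "(b',a2,a2') \<in> D" "lam (b',a2,a2') = l"
      using xin unfolding R_def by auto
    have e1: "fp_sub p a1' b = fp_mul p l (fp_sub p a1 b)" using lamP[OF D1(1)] D1(2) unfolding P_def by auto
    have e2: "fp_sub p a2' b' = fp_mul p l (fp_sub p a2 b')" using lamP[OF D2(1)] D2(2) unfolding P_def by auto
    have mem: "b \<in> B" "b' \<in> B" "a1 \<in> A" "a1' \<in> A" "a2 \<in> A" "a2' \<in> A" using D1 D2 unfolding D_def by auto
    have mm: "fp_mul p (fp_sub p a1' b) (fp_sub p a2 b') = fp_mul p (fp_sub p a1 b) (fp_sub p a2' b')"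
      unfolding e1 e2 by (rule mul_swap)
    have s1: "fp_sub p a1' b \<in> shift p A b" "fp_sub p a1 b \<in> shift p A b"
      "fp_sub p a2 b' \<in> shift p A b'" "fp_sub p a2' b' \<in> shift p A b'"
      unfolding shift_def using mem by blast+
    have "(fp_sub p a1' b, fp_sub p a2 b', fp_sub p a1 b, fp_sub p a2' b') \<in> E b b'"
      unfolding E_def using s1 mm by simp
    thus "z \<in> (SIGMA b:B. SIGMA b':B. E b b')"
      unfolding ze xe f_def using mem by simp
  qed
  have fT: "finite (SIGMA b:B. SIGMA b':B. E b b')" using fB fE by auto
  have r_le: "(\<Sum>l\<in>G. (real (card (R l)))^2) \<le> real (T_AB p A B)"
    unfolding r_eq T_eq using card_inj_on_le[OF finj fim fT] by simp
  have "(\<Sum>b\<in>B. \<Sum>a\<in>A-{b}. \<Sum>a'\<in>A-{b}. g (fp_sub p a' a))^2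
      \<le> (\<Sum>l\<in>G. (h l)^2) * (\<Sum>l\<in>G. (real (card (R l)))^2)"
    unfolding M_eq2 by (rule Cauchy_Schwarz_ineq_sum)
  also have "\<dots> \<le> (\<Sum>l\<in>G. (h l)^2) * real (T_AB p A B)"
    by (intro mult_left_mono r_le sum_nonneg) auto
  finally have "(\<Sum>b\<in>B. \<Sum>a\<in>A-{b}. \<Sum>a'\<in>A-{b}. g (fp_sub p a' a))^2 * real (card G)
      \<le> (\<Sum>l\<in>G. (h l)^2) * real (T_AB p A B) * real (card G)"
    by (intro mult_right_mono) auto
  thus ?thesis unfolding S_eq by (simp add: ac_simps)
qed

theorem proposition4:
  "\<exists>c::real. c > 0 \<and>
    (\<forall>(p::nat) G A B (g::nat \<Rightarrow> real).
      prime p \<longrightarrow> mult_subgroup p G \<longrightarrow> A \<subseteq> {..<p} \<longrightarrow> B \<subseteq> {..<p} \<longrightarrow> B \<noteq> {} \<longrightarrow>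
      (\<forall>x<p. g x \<ge> 0) \<longrightarrow>
      (\<forall>x<p. g (fp_neg p x) = g x) \<longrightarrow>
      (\<forall>x<p. \<forall>\<gamma>\<in>G. g (fp_mul p \<gamma> x) = g x) \<longrightarrow>
      (\<forall>x<p. g x \<noteq> 0 \<longrightarrow> x \<in> S_Gamma p G (diffset p A A)) \<longrightarrow>
      diffset p A B \<subseteq> G \<union> {0} \<longrightarrow>
      real (card B) * (\<Sum>x<p. g x * circ p A A x) \<ge> 3 * (\<Sum>x<p. g x * circ p A B x) \<longrightarrow>
      (\<Sum>x<p. g x * circ p A A x)^2
        \<le> c * (real (T_AB p A B) / (real (card B)^2 * real (card G)))
            * (\<Sum>x<p. (g x)^2 * circ p G G x))"
proof (intro exI[of _ 9] conjI allI impI)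
  show "(0::real) < 9" by simp
  fix p G A B and g :: "nat \<Rightarrow> real"
  assume p: "prime p" and G: "mult_subgroup p G" and A: "A \<subseteq> {..<p}" and B: "B \<subseteq> {..<p}"
    and Bne: "B \<noteq> {}" and gnn: "\<forall>x<p. g x \<ge> 0" and ev: "\<forall>x<p. g (fp_neg p x) = g x"
    and inv: "\<forall>x<p. \<forall>\<gamma>\<in>G. g (fp_mul p \<gamma> x) = g x"
    and supp: "\<forall>x<p. g x \<noteq> 0 \<longrightarrow> x \<in> S_Gamma p G (diffset p A A)"
    and dif: "diffset p A B \<subseteq> G \<union> {0}"
    and cond: "real (card B) * (\<Sum>x<p. g x * circ p A A x) \<ge> 3 * (\<Sum>x<p. g x * circ p A B x)"
  define \<sigma> where "\<sigma> = (\<Sum>x<p. g x * circ p A A x)"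
  define Eab where "Eab = (\<Sum>x<p. g x * circ p A B x)"
  define S where "S = (\<Sum>x<p. (g x)^2 * circ p G G x)"
  define M where "M = (\<Sum>b\<in>B. \<Sum>a\<in>A-{b}. \<Sum>a'\<in>A-{b}. g (fp_sub p a' a))"
  define T where "T = real (T_AB p A B)"
  have p0: "0 < p" using p prime_gt_0_nat by blast
  have Gsub: "G \<subseteq> {1..<p}" and G1: "1 \<in> G" using G unfolding mult_subgroup_def by auto
  have fG: "finite G" using Gsub finite_subset by blast
  have fA: "finite A" using A finite_subset by blast
  have fB: "finite B" using B finite_subset by blast
  have nG: "real (card G) > 0" using fG G1 card_gt_0_iff by fastforce
  have nB: "real (card B) > 0" using fB Bne card_gt_0_iff by fastforce
  have GG: "G \<subseteq> {..<p}" using Gsub by auto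
  have gs: "g (fp_sub p x y) \<ge> 0" for x y using gnn sub_lt[OF p0] by blast
  have \<sigma>_eq: "\<sigma> = (\<Sum>a\<in>A. \<Sum>a'\<in>A. g (fp_sub p a' a))"
    unfolding \<sigma>_def by (rule circ_sum[OF p0 A A])
  have E_eq: "Eab = (\<Sum>b\<in>B. \<Sum>a\<in>A. g (fp_sub p b a))"
    unfolding Eab_def circ_sum[OF p0 A B] by (rule sum.swap)
  have S_eq: "S = (\<Sum>w\<in>G. \<Sum>z\<in>G. (g (fp_sub p z w))^2)"
    unfolding S_def by (rule circ_sum[OF p0 GG GG])
  have core': "M^2 * real (card G) \<le> T * S"
    unfolding M_def T_def S_eq by (rule core[OF p G A B inv dif])
  have \<sigma>0: "\<sigma> \<ge> 0" unfolding \<sigma>_eq using gs by (intro sum_nonneg) auto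
  have rowb: "\<sigma> \<le> (\<Sum>a\<in>A-{b}. \<Sum>a'\<in>A-{b}. g (fp_sub p a' a)) + 2 * (\<Sum>a\<in>A. g (fp_sub p b a))"
    if b: "b \<in> B" for b
  proof -
    have bp: "b < p" using b B by auto
    have "(\<Sum>a'\<in>A. g (fp_sub p a' b)) = (\<Sum>a\<in>A. g (fp_sub p b a))"
    proof (intro sum.cong refl)
      fix a assume "a \<in> A"
      hence ap: "a < p" using A by auto
      have "g (fp_sub p a b) = g (fp_neg p (fp_sub p b a))" using neg_sub[OF ap bp] by simp
      also have "\<dots> = g (fp_sub p b a)" using ev sub_lt[OF p0] by blast
      finally show "g (fp_sub p a b) = g (fp_sub p b a)" .
    qed
    thus ?thesis unfolding \<sigma>_eq
      using split_le[OF fA, of "\<lambda>a a'. g (fp_sub p a' a)" b] gs by simp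
  qed
  have "real (card B) * \<sigma> = (\<Sum>b\<in>B. \<sigma>)" by simp
  also have "\<dots> \<le> (\<Sum>b\<in>B. (\<Sum>a\<in>A-{b}. \<Sum>a'\<in>A-{b}. g (fp_sub p a' a)) + 2 * (\<Sum>a\<in>A. g (fp_sub p b a)))"
    by (rule sum_mono) (rule rowb)
  also have "\<dots> = M + 2 * Eab" unfolding M_def E_eq by (simp add: sum.distrib sum_distrib_left)
  finally have main: "real (card B) * \<sigma> \<le> M + 2 * Eab" .
  have cond': "3 * Eab \<le> real (card B) * \<sigma>" using cond unfolding \<sigma>_def Eab_def .
  have Mlow: "real (card B) * \<sigma> \<le> 3 * M" using main cond' by linarith
  have nn: "0 \<le> real (card B) * \<sigma>" using nB \<sigma>0 by simp
  have "(real (card B) * \<sigma>)^2 \<le> (3 * M)^2" by (rule power_mono[OF Mlow nn])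
  hence "(real (card B) * \<sigma>)^2 * real (card G) \<le> 9 * (M^2 * real (card G))"
    using nG by (simp add: power_mult_distrib mult_right_mono)
  also have "\<dots> \<le> 9 * (T * S)" using core' by simp
  finally have key: "\<sigma>^2 * (real (card B)^2 * real (card G)) \<le> 9 * T * S"
    by (simp add: power_mult_distrib ac_simps)
  have pos: "real (card B)^2 * real (card G) > 0" using nB nG by simp
  have "\<sigma>^2 \<le> 9 * T * S / (real (card B)^2 * real (card G))"
    using key pos by (simp add: pos_le_divide_eq)
  thus "(\<Sum>x<p. g x * circ p A A x)^2
        \<le> 9 * (real (T_AB p A B) / (real (card B)^2 * real (card G)))
            * (\<Sum>x<p. (g x)^2 * circ p G G x)"
    unfolding \<sigma>_def[symmetric] S_def[symmetric] T_def[symmetric] by simp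
qed

end
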